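(* Let $h$ be a hospital whose utility is proportional to total wage, i.e. $f_h(Y)=\gamma_h\,w_h(Y)$ for all $Y\subseteq X_h$ for some constant $\gamma_h>0$. Define $\mathrm{Ch}_h:2^{X_h}\to2^{X_h}$ as follows: given $X'\subseteq X_h$ (with $\mathrm{Ch}_h(\emptyset)=\emptyset$), sort $X'$ in non-decreasing order of wage (ties broken by a fixed order) as $x^{(1)},\dots,x^{(|X'|)}$; start with $Y=\emptyset$ and for $i=1,\dots,|X'|-1$ add $x^{(i)}$ to $Y$ if $w_h(Y\cup\{x^{(i)}\})<B_h$; finally add $x^{(|X'|)}$ (a highest-wage contract) to $Y$ and return $Y$. Then $\mathrm{Ch}_h$ satisfies SUB, IRC, LAD and COM.
   Context: Hospital $h$ has a finite set $X_h$ of contracts $x$ with wages $x_W$, $0<x_W\le B_h$, where $B_h>0$ is its budget. $w_h(Y)=\sum_{x\in Y}x_W$ for $Y\subseteq X_h$. For $\mathrm{Ch}_h$ with $\mathrm{Ch}_h(Y)\subseteq Y$: SUB means for all $Y''\subseteq Y'\subseteq X_h$, $Y''\setminus\mathrm{Ch}_h(Y'')\subseteq Y'\setminus\mathrm{Ch}_h(Y')$; IRC means for $Y'\subseteq X_h$, $Y''\subseteq X_h\setminus Y'$, if $\mathrm{Ch}_h(Y'\cup Y'')\subseteq Y'$ then $\mathrm{Ch}_h(Y')=\mathrm{Ch}_h(Y'\cup Y'')$; LAD means for all $Y''\subseteq Y'\subseteq X_h$, $|\mathrm{Ch}_h(Y'')|\le|\mathrm{Ch}_h(Y')|$; COM means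 for all $Y''\subseteq Y'\subseteq X_h$ with $w_h(Y'')\le\max\{B_h,w_h(\mathrm{Ch}_h(Y'))\}$, $f_h(\mathrm{Ch}_h(Y'))\ge f_h(Y'')$. *)

theory Defs
  imports Complex_Main "HOL-Library.Product_Lexorder"
begin

definition wsum :: "('a \<Rightarrow> real) \<Rightarrow> 'a set \<Rightarrow> real" where
  "wsum wage Y = (\<Sum>x\<in>Y. wage x)"

fun greedy :: "('a \<Rightarrow> real) \<Rightarrow> real \<Rightarrow> 'a list \<Rightarrow> 'a set \<Rightarrow> 'a set" where
  "greedy wage B [] Y = Y"
| "greedy wage B (x # xs) Y =
     greedy wage B xs (if wsum wage (Y \<union> {x}) < B then Y \<union> {x} else Y)"

definition sorted_contracts :: "('a \<Rightarrow> real) \<Rightarrow> ('a \<Rightarrow> nat) \<Rightarrow> 'a set \<Rightarrow> 'a list" where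
  "sorted_contracts wage r X' = sorted_key_list_of_set (\<lambda>x. (wage x, r x)) X'"

definition Ch :: "('a \<Rightarrow> real) \<Rightarrow> real \<Rightarrow> ('a \<Rightarrow> nat) \<Rightarrow> 'a set \<Rightarrow> 'a set" where
  "Ch wage B r X' =
     (if X' = {} then {}
      else (let xs = sorted_contracts wage r X'
            in greedy wage B (butlast xs) {} \<union> {last xs}))"

definition SUB :: "'a set \<Rightarrow> ('a set \<Rightarrow> 'a set) \<Rightarrow> bool" where
  "SUB X C = (\<forall>Y' Y''. Y'' \<subseteq> Y' \<and> Y' \<subseteq> X \<longrightarrow> Y'' - C Y'' \<subseteq> Y' - C Y')"

definition IRC :: "'a set \<Rightarrow> ('a set \<Rightarrow> 'a set) \<Rightarrow> bool" where
  "IRC X C = (\<forall>Y' Y''. Y' \<subseteq> X \<and> Y'' \<subseteq> X - Y' \<longrightarrow>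
                 C (Y' \<union> Y'') \<subseteq> Y' \<longrightarrow> C Y' = C (Y' \<union> Y''))"

definition LAD :: "'a set \<Rightarrow> ('a set \<Rightarrow> 'a set) \<Rightarrow> bool" where
  "LAD X C = (\<forall>Y' Y''. Y'' \<subseteq> Y' \<and> Y' \<subseteq> X \<longrightarrow> card (C Y'') \<le> card (C Y'))"

definition COM :: "'a set \<Rightarrow> real \<Rightarrow> ('a \<Rightarrow> real) \<Rightarrow> ('a set \<Rightarrow> real) \<Rightarrow> ('a set \<Rightarrow> 'a set) \<Rightarrow> bool" where
  "COM X B wage f C = (\<forall>Y' Y''. Y'' \<subseteq> Y' \<and> Y' \<subseteq> X \<and>
        wsum wage Y'' \<le> max B (wsum wage (C Y')) \<longrightarrow> f (C Y') \<ge> f Y'')"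

end

theory Submission
  imports Defs
begin

lemma ik: "linorder.insort_key ((\<le>)::'a::linorder \<Rightarrow> _) = insort_key"
  apply (rule ext)+
  subgoal for f x xs by (induction xs) (simp_all add: linorder.insort_key.simps[OF linorder_class.linorder_axioms])
  done

lemma skl: "linorder.sorted_key_list_of_set ((\<le>)::'a::linorder \<Rightarrow> _) = sorted_key_list_of_set"
  apply (rule ext)+
  apply (simp add: ik sorted_key_list_of_set_def linorder.sorted_key_list_of_set_def[OF linorder_class.linorder_axioms])
  done

locale hosp =
  fixes X :: "'a set" and wage :: "'a \<Rightarrow> real" and B :: real and r :: "'a \<Rightarrow> nat"
  assumes finX: "finite X" and pos: "\<forall>x\<in>X. 0 < wage x" and injr: "inj_on r X"
begin

definition key :: "'a \<Rightarrow> real \<times> nat" where "key = (\<lambda>x. (wage x, r x))"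

definition cum :: "'a set \<Rightarrow> 'a \<Rightarrow> real" where
  "cum Y x = wsum wage {y\<in>Y. key y \<le> key x}"

definition chr :: "'a set \<Rightarrow> 'a set" where
  "chr Y = {x\<in>Y. (\<exists>y\<in>Y. key x < key y) \<and> cum Y x < B} \<union> {x\<in>Y. \<forall>y\<in>Y. key y \<le> key x}"

lemma key_inj: "x \<in> X \<Longrightarrow> y \<in> X \<Longrightarrow> key x = key y \<Longrightarrow> x = y"
  using injr by (auto simp: key_def dest: inj_onD)

lemma inj_key: "inj_on key X"
  using key_inj by (auto intro: inj_onI)

lemma key_wage: "key a < key b \<Longrightarrow> wage a \<le> wage b"
  by (auto simp: key_def)

lemma wsum_insert: "finite A \<Longrightarrow> a \<notin> A \<Longrightarrow> wsum wage (insert a A) = wage a + wsum wage A"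
  by (simp add: wsum_def)

lemma wsum_mono: "A \<subseteq> C \<Longrightarrow> C \<subseteq> X \<Longrightarrow> wsum wage A \<le> wsum wage C"
  unfolding wsum_def
  by (rule sum_mono2) (use finX pos in \<open>auto intro: finite_subset less_imp_le\<close>)

lemma greedy_char:
  assumes "sorted_wrt (\<lambda>a b. key a < key b) ys" "set ys \<subseteq> X" "Y0 \<subseteq> X" "Y0 \<inter> set ys = {}"
  shows "greedy wage B ys Y0 = Y0 \<union> {x \<in> set ys. wsum wage (Y0 \<union> {y\<in>set ys. key y \<le> key x}) < B}"
  using assms
proof (induction ys arbitrary: Y0)
  case Nil
  then show ?case by simp
next
  case (Cons x ys)
  let ?S = "set ys"
  have lt: "\<And>z. z \<in> ?S \<Longrightarrow> key x < key z" using Cons.prems(1) by simp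
  have e1: "\<And>z. z \<in> ?S \<Longrightarrow> {y \<in> set (x#ys). key y \<le> key z} = insert x {y\<in>?S. key y \<le> key z}"
    using lt by (auto intro: less_imp_le)
  have lt': "\<forall>z\<in>?S. \<not> key z \<le> key x" using lt by (simp add: not_le)
  have e2: "{y \<in> set (x#ys). key y \<le> key x} = {x}"
    using lt' by auto
  have xX: "x \<in> X" and xY0: "x \<notin> Y0" using Cons.prems by auto
  show ?case
  proof (cases "wsum wage (Y0 \<union> {x}) < B")
    case True
    have IH: "greedy wage B ys (insert x Y0) = insert x Y0 \<union> {z \<in> ?S. wsum wage (insert x Y0 \<union> {y\<in>?S. key y \<le> key z}) < B}"
      using Cons.IH[of "insert x Y0"] Cons.prems by auto
    have "greedy wage B (x#ys) Y0 = greedy wage B ys (insert x Y0)" using True by simp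
    also have "\<dots> = Y0 \<union> {z \<in> set (x#ys). wsum wage (Y0 \<union> {y\<in>set (x#ys). key y \<le> key z}) < B}"
      unfolding IH using True e1 e2 by (auto simp: insert_commute)
    finally show ?thesis .
  next
    case False
    have IH: "greedy wage B ys Y0 = Y0 \<union> {z \<in> ?S. wsum wage (Y0 \<union> {y\<in>?S. key y \<le> key z}) < B}"
      using Cons.IH[of Y0] Cons.prems by auto
    have fY0: "finite Y0" using Cons.prems(3) finX finite_subset by blast
    have big: "\<not> wsum wage (Y0 \<union> {y\<in>?S. key y \<le> key z}) < B" if z: "z \<in> ?S" for z
    proof -
      have zX: "z \<in> X" "z \<notin> Y0" using z Cons.prems by auto
      have "wsum wage (Y0 \<union> {x}) = wage x + wsum wage Y0" using wsum_insert[OF fY0 xY0] by simp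
      also have "\<dots> \<le> wage z + wsum wage Y0" using key_wage[OF lt[OF z]] by simp
      also have "\<dots> = wsum wage (insert z Y0)" using wsum_insert[OF fY0 zX(2)] by simp
      also have "\<dots> \<le> wsum wage (Y0 \<union> {y\<in>?S. key y \<le> key z})"
        by (rule wsum_mono) (use z Cons.prems in auto)
      finally show ?thesis using False by simp
    qed
    have big2: "\<not> wsum wage (Y0 \<union> insert x {y\<in>?S. key y \<le> key z}) < B" if z: "z \<in> ?S" for z
    proof -
      have "wsum wage (Y0 \<union> {x}) \<le> wsum wage (Y0 \<union> insert x {y\<in>?S. key y \<le> key z})"
        by (rule wsum_mono) (use z Cons.prems in auto)
      then show ?thesis using False by simp
    qed
    have "greedy wage B (x#ys) Y0 = greedy wage B ys Y0" using False by simp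
    also have "\<dots> = Y0" using IH big by auto
    also have "\<dots> = Y0 \<union> {z \<in> set (x#ys). wsum wage (Y0 \<union> {y\<in>set (x#ys). key y \<le> key z}) < B}"
      using big2 e1 e2 False by auto
    finally show ?thesis .
  qed
qed

lemma chr_max:
  assumes "Y \<subseteq> X" "m \<in> Y" "\<forall>y\<in>Y. key y \<le> key m"
  shows "chr Y = insert m {x\<in>Y. key x < key m \<and> cum Y x < B}"
proof -
  have a: "(\<exists>y\<in>Y. key x < key y) \<longleftrightarrow> key x < key m" if "x \<in> Y" for x
    using assms(2,3) less_le_trans by blast
  have b: "(\<forall>y\<in>Y. key y \<le> key x) \<longleftrightarrow> x = m" if "x \<in> Y" for x
  proof
    assume "\<forall>y\<in>Y. key y \<le> key x"
    then have "key m \<le> key x" using assms(2) by blast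
    moreover have "key x \<le> key m" using assms(3) that by blast
    ultimately have "key x = key m" by simp
    moreover have "x \<in> X" "m \<in> X" using that assms(1,2) by auto
    ultimately show "x = m" using key_inj by blast
  next
    assume "x = m" then show "\<forall>y\<in>Y. key y \<le> key x" using assms(3) by simp
  qed
  show ?thesis
  proof (rule set_eqI)
    fix x
    show "x \<in> chr Y \<longleftrightarrow> x \<in> insert m {x\<in>Y. key x < key m \<and> cum Y x < B}"
    proof (cases "x \<in> Y")
      case True
      then show ?thesis unfolding chr_def using a[OF True] b[OF True] by auto
    next
      case False then show ?thesis unfolding chr_def using assms(2) by auto
    qed
  qed
qed

lemma Ch_chr:
  assumes "Y \<subseteq> X"
  shows "Ch wage B r Y = chr Y"
proof (cases "Y = {}")
  case True
  then show ?thesis by (simp add: Ch_def chr_def)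
next
  case False
  interpret FK: folding_insort_key "(\<le>)" "(<)" X key
    by unfold_locales (rule inj_key)
  define xs where "xs = sorted_key_list_of_set key Y"
  have fY: "finite Y" using assms finX finite_subset by blast
  have setxs: "set xs = Y" unfolding xs_def using FK.set_sorted_key_list_of_set[OF assms fY] by (simp add: skl)
  have sw: "sorted_wrt (\<lambda>a b. key a < key b) xs"
    using FK.strict_sorted_key_list_of_set[OF assms] unfolding xs_def by (simp add: sorted_wrt_map skl)
  have dxs: "distinct xs" using FK.distinct_sorted_key_list_of_set[OF assms] unfolding xs_def
    by (simp add: distinct_map skl)
  have ne: "xs \<noteq> []" using setxs False by auto
  define bl where "bl = butlast xs"
  define m where "m = last xs"
  have xsd: "xs = bl @ [m]" using ne by (simp add: bl_def m_def)
  have swbl: "sorted_wrt (\<lambda>a b. key a < key b) bl" and blm: "\<forall>a\<in>set bl. key a < key m"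
    using sw unfolding xsd by (auto simp: sorted_wrt_append)
  have mY: "m \<in> Y" and setbl: "set bl = Y - {m}"
    using setxs dxs unfolding xsd by auto
  have Ch: "Ch wage B r Y = greedy wage B bl {} \<union> {m}"
  proof -
    have "sorted_contracts wage r Y = xs" unfolding sorted_contracts_def xs_def key_def ..
    then show ?thesis using False unfolding Ch_def bl_def m_def by (simp add: Let_def)
  qed
  have g: "greedy wage B bl {} = {x \<in> set bl. wsum wage ({} \<union> {y\<in>set bl. key y \<le> key x}) < B}"
  proof -
    have "set bl \<subseteq> X" using setbl assms by auto
    then show ?thesis using greedy_char[OF swbl, of "{}"] by simp
  qed
  have maxm: "\<forall>y\<in>Y. key y \<le> key m" using blm setbl by (auto intro: less_imp_le)
  have bl_iff: "x \<in> set bl \<longleftrightarrow> x \<in> Y \<and> key x < key m" for x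
    using blm setbl by auto
  have eq: "{y\<in>set bl. key y \<le> key x} = {y\<in>Y. key y \<le> key x}" if "x \<in> set bl" for x
  proof -
    have "\<not> key m \<le> key x" using that blm by (simp add: not_le)
    then show ?thesis unfolding setbl by auto
  qed
  have "greedy wage B bl {} = {x\<in>Y. key x < key m \<and> cum Y x < B}"
    unfolding g
  proof (rule set_eqI)
    fix x
    show "x \<in> {x \<in> set bl. wsum wage ({} \<union> {y\<in>set bl. key y \<le> key x}) < B} \<longleftrightarrow> x \<in> {x\<in>Y. key x < key m \<and> cum Y x < B}"
    proof (cases "x \<in> set bl")
      case True then show ?thesis using eq[OF True] bl_iff[of x] by (simp add: cum_def)
    next
      case False then show ?thesis using bl_iff[of x] by blast
    qed
  qed
  then show ?thesis unfolding Ch chr_max[OF assms mY maxm] by auto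
qed


lemma finsub: "Y \<subseteq> X \<Longrightarrow> finite Y"
  using finX finite_subset by blast

lemma chr_sub: "chr Y \<subseteq> Y"
  by (auto simp: chr_def)

lemma cum_mono_set: "Y \<subseteq> Y' \<Longrightarrow> Y' \<subseteq> X \<Longrightarrow> cum Y x \<le> cum Y' x"
  unfolding cum_def by (rule wsum_mono) auto

lemma cum_lt:
  assumes "Y \<subseteq> X" "b \<in> Y" "key a < key b"
  shows "cum Y a + wage b \<le> cum Y b"
proof -
  have fin: "finite {y\<in>Y. key y \<le> key a}" using finsub[OF assms(1)] by simp
  have nb: "b \<notin> {y\<in>Y. key y \<le> key a}" using assms(3) by auto
  have "cum Y a + wage b = wsum wage (insert b {y\<in>Y. key y \<le> key a})"
    unfolding cum_def using wsum_insert[OF fin nb] by simp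
  also have "\<dots> \<le> cum Y b" unfolding cum_def
    by (rule wsum_mono) (use assms in auto)
  finally show ?thesis .
qed

lemma cum_ins:
  assumes "Y \<subseteq> X" "z \<in> X" "z \<notin> Y"
  shows "cum (insert z Y) x = (if key z \<le> key x then cum Y x + wage z else cum Y x)"
proof (cases "key z \<le> key x")
  case True
  have fin: "finite {y\<in>Y. key y \<le> key x}" using finsub[OF assms(1)] by simp
  have "{y\<in>insert z Y. key y \<le> key x} = insert z {y\<in>Y. key y \<le> key x}" using True by auto
  then show ?thesis using True wsum_insert[OF fin, of z] assms(3) unfolding cum_def by simp
next
  case False
  have "{y\<in>insert z Y. key y \<le> key x} = {y\<in>Y. key y \<le> key x}" using False by auto
  then show ?thesis using False unfolding cum_def by simp
qed

lemma ex_max: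
  assumes "Y \<subseteq> X" "Y \<noteq> {}"
  shows "\<exists>m\<in>Y. \<forall>y\<in>Y. key y \<le> key m"
proof -
  have f: "finite (key ` Y)" using finsub[OF assms(1)] by simp
  have "Max (key ` Y) \<in> key ` Y" using Max_in[OF f] assms(2) by simp
  then obtain m where "m \<in> Y" "key m = Max (key ` Y)" by auto
  then show ?thesis
  proof (intro bexI[of _ m] ballI)
    fix y assume "y \<in> Y"
    then have "key y \<in> key ` Y" by (rule imageI)
    from Max_ge[OF f this] show "key y \<le> key m" using \<open>key m = Max (key ` Y)\<close> by simp
  qed (simp)
qed

lemma ex_min:
  assumes "finite A" "A \<noteq> {}"
  shows "\<exists>z\<in>A. \<forall>a\<in>A. key z \<le> key a"
proof -
  have f: "finite (key ` A)" using assms(1) by simp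
  have "Min (key ` A) \<in> key ` A" using Min_in[OF f] assms(2) by simp
  then obtain m where "m \<in> A" "key m = Min (key ` A)" by auto
  then show ?thesis
  proof (intro bexI[of _ m] ballI)
    fix y assume "y \<in> A"
    then have "key y \<in> key ` A" by (rule imageI)
    from Min_le[OF f this] show "key m \<le> key y" using \<open>key m = Min (key ` A)\<close> by simp
  qed (simp)
qed

lemma chr_SUB:
  assumes "Y'' \<subseteq> Y'" "Y' \<subseteq> X"
  shows "Y'' - chr Y'' \<subseteq> Y' - chr Y'"
proof
  fix x assume x: "x \<in> Y'' - chr Y''"
  then obtain y where y: "y \<in> Y''" "\<not> key y \<le> key x" unfolding chr_def by auto
  then have lt: "key x < key y" by simp
  then have "\<not> cum Y'' x < B" using x y(1) unfolding chr_def by auto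
  moreover have "cum Y'' x \<le> cum Y' x" by (rule cum_mono_set[OF assms])
  ultimately have "\<not> cum Y' x < B" by simp
  then show "x \<in> Y' - chr Y'" using x y lt assms(1) unfolding chr_def by auto
qed

lemma chr_COM:
  assumes "Y \<subseteq> X" "chr Y \<noteq> Y"
  shows "B \<le> wsum wage (chr Y)"
proof -
  obtain x where x: "x \<in> Y" "x \<notin> chr Y" using assms(2) chr_sub by blast
  then obtain y where y: "y \<in> Y" "\<not> key y \<le> key x" unfolding chr_def by auto
  then have "key x < key y" by simp
  then have xc: "\<not> cum Y x < B" using x y(1) unfolding chr_def by auto
  define Z where "Z = {z\<in>Y. (\<exists>y\<in>Y. key z < key y) \<and> B \<le> cum Y z}"
  have xZ: "x \<in> Z" unfolding Z_def using x y xc by (auto simp: not_le)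
  have fZ: "finite Z" unfolding Z_def using finsub[OF assms(1)] by simp
  obtain z where z: "z \<in> Z" "\<forall>a\<in>Z. key z \<le> key a" using ex_min[OF fZ] xZ by blast
  have ne: "Y \<noteq> {}" using x by auto
  obtain m where m: "m \<in> Y" "\<forall>y\<in>Y. key y \<le> key m" using ex_max[OF assms(1) ne] by blast
  have zY: "z \<in> Y" and zm: "key z < key m" and zc: "B \<le> cum Y z"
    using z(1) m unfolding Z_def by (auto intro: less_le_trans)
  have sub: "insert m {y\<in>Y. key y < key z} \<subseteq> chr Y"
  proof
    fix a assume a: "a \<in> insert m {y\<in>Y. key y < key z}"
    show "a \<in> chr Y"
    proof (cases "a = m")
      case True then show ?thesis using m unfolding chr_def by auto
    next
      case False
      then have aY: "a \<in> Y" and az: "key a < key z" using a by auto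
      have am: "key a < key m" using az zm by simp
      have "a \<notin> Z"
      proof
        assume "a \<in> Z" then have "key z \<le> key a" using z(2) by blast
        with az show False by simp
      qed
      then have "cum Y a < B" using aY am m(1) unfolding Z_def by auto
      then show ?thesis using aY am m(1) unfolding chr_def by auto
    qed
  qed
  have fin: "finite {y\<in>Y. key y < key z}" using finsub[OF assms(1)] by simp
  have mn: "m \<notin> {y\<in>Y. key y < key z}" using zm by auto
  have e: "{y\<in>Y. key y \<le> key z} = insert z {y\<in>Y. key y < key z}"
    using key_inj[of _ z] zY assms(1) by (auto simp: order.order_iff_strict)
  have zn: "z \<notin> {y\<in>Y. key y < key z}" by auto
  have "cum Y z = wage z + wsum wage {y\<in>Y. key y < key z}"
    unfolding cum_def e using wsum_insert[OF fin zn] .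
  also have "\<dots> \<le> wage m + wsum wage {y\<in>Y. key y < key z}"
    using key_wage[OF zm] by simp
  also have "\<dots> = wsum wage (insert m {y\<in>Y. key y < key z})"
    using wsum_insert[OF fin mn] by simp
  also have "\<dots> \<le> wsum wage (chr Y)"
    by (rule wsum_mono[OF sub]) (use chr_sub assms(1) in blast)
  finally show ?thesis using zc by simp
qed


lemma chr_fin: "Y \<subseteq> X \<Longrightarrow> finite (chr Y)"
  using chr_sub finsub finite_subset by blast

lemma chr_empty: "chr {} = {}"
  by (simp add: chr_def)

lemma chr_ins:
  assumes Y: "Y \<subseteq> X" and zX: "z \<in> X" and zY: "z \<notin> Y"
  shows "card (chr Y) \<le> card (chr (insert z Y))"
proof (cases "Y = {}")
  case True then show ?thesis by (simp add: chr_empty)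
next
  case False
  let ?Y1 = "insert z Y"
  have Y1: "?Y1 \<subseteq> X" using Y zX by auto
  have fin1: "finite (chr ?Y1)" using chr_fin[OF Y1] .
  obtain m where m: "m \<in> Y" "\<forall>y\<in>Y. key y \<le> key m" using ex_max[OF Y False] by blast
  define P where "P = {x\<in>Y. key x < key m \<and> cum Y x < B}"
  have cY: "chr Y = insert m P" unfolding P_def by (rule chr_max[OF Y m])
  have mP: "m \<notin> P" and zP: "z \<notin> P" using zY unfolding P_def by auto
  have finP: "finite P" unfolding P_def using finsub[OF Y] by simp
  have zm_ne: "key z \<noteq> key m" using key_inj[of z m] zX m(1) Y zY by auto
  have cins: "cum ?Y1 x = (if key z \<le> key x then cum Y x + wage z else cum Y x)" for x
    by (rule cum_ins[OF Y zX zY])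
  show ?thesis
  proof (cases "key m < key z")
    case True
    have mx1: "\<forall>y\<in>?Y1. key y \<le> key z" using m(2) True by (auto intro: order.trans less_imp_le)
    have c1: "chr ?Y1 = insert z {x\<in>?Y1. key x < key z \<and> cum ?Y1 x < B}"
      by (rule chr_max[OF Y1 _ mx1]) simp
    have "insert z P \<subseteq> chr ?Y1"
    proof
      fix x assume "x \<in> insert z P"
      then show "x \<in> chr ?Y1"
      proof
        assume "x = z" then show ?thesis unfolding c1 by simp
      next
        assume xP: "x \<in> P"
        then have xm: "key x < key m" and xc: "cum Y x < B" and xY: "x \<in> Y" unfolding P_def by auto
        have xz: "key x < key z" using xm True by simp
        then have "\<not> key z \<le> key x" by simp
        then have "cum ?Y1 x = cum Y x" using cins[of x] by simp
        then show ?thesis unfolding c1 using xY xz xc by auto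
      qed
    qed
    then have "card (insert z P) \<le> card (chr ?Y1)" by (rule card_mono[OF fin1])
    then show ?thesis unfolding cY using finP mP zP by simp
  next
    case False
    then have zm: "key z < key m" using zm_ne by simp
    have mx1: "\<forall>y\<in>?Y1. key y \<le> key m" using m(2) zm by auto
    have c1: "chr ?Y1 = insert m {x\<in>?Y1. key x < key m \<and> cum ?Y1 x < B}"
      by (rule chr_max[OF Y1 _ mx1]) (use m(1) in simp)
    have keep: "x \<in> chr ?Y1" if xP: "x \<in> P" and xc: "key z < key x \<longrightarrow> cum Y x + wage z < B" for x
    proof -
      have xm: "key x < key m" and xc0: "cum Y x < B" and xY: "x \<in> Y" using xP unfolding P_def by auto
      have "key x \<noteq> key z" using key_inj[of x z] xY Y zX zY by auto
      then have "cum ?Y1 x < B" using cins[of x] xc xc0 by (cases "key z < key x") auto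
      then show ?thesis unfolding c1 using xY xm by auto
    qed
    show ?thesis
    proof (cases "\<exists>d\<in>P. key z < key d \<and> B \<le> cum Y d + wage z")
      case False
      have "chr Y \<subseteq> chr ?Y1"
      proof
        fix x assume "x \<in> chr Y"
        then show "x \<in> chr ?Y1" unfolding cY
        proof
          assume "x = m" then show ?thesis unfolding c1 by simp
        next
          assume xP: "x \<in> P" then show ?thesis using keep False by (auto simp: not_le)
        qed
      qed
      then show ?thesis by (rule card_mono[OF fin1])
    next
      case True
      then obtain d where dP: "d \<in> P" and zd: "key z < key d" and dc: "B \<le> cum Y d + wage z" by blast
      have dY: "d \<in> Y" and dcB: "cum Y d < B" and dm: "key d < key m" using dP unfolding P_def by auto
      have zin: "z \<in> chr ?Y1"
      proof -
        have "cum ?Y1 z = cum Y z + wage z" using cins[of z] by simp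
        also have "\<dots> \<le> cum Y z + wage d" using key_wage[OF zd] by simp
        also have "\<dots> \<le> cum Y d" by (rule cum_lt[OF Y dY zd])
        finally have "cum ?Y1 z < B" using dcB by simp
        then show ?thesis unfolding c1 using zm by auto
      qed
      have "insert z (chr Y - {d}) \<subseteq> chr ?Y1"
      proof
        fix x assume "x \<in> insert z (chr Y - {d})"
        then consider "x = z" | "x = m" | "x \<in> P" "x \<noteq> d" unfolding cY by auto
        then show "x \<in> chr ?Y1"
        proof cases
          case 1 then show ?thesis using zin by simp
        next
          case 2 then show ?thesis unfolding c1 by simp
        next
          case 3
          have xY: "x \<in> Y" and xcB: "cum Y x < B" using 3(1) unfolding P_def by auto
          have "key x \<noteq> key d" using key_inj[of x d] xY dY Y 3(2) by auto
          then consider "key x < key d" | "key d < key x" by fastforce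
          then have "key z < key x \<longrightarrow> cum Y x + wage z < B"
          proof cases
            case 1
            show ?thesis
            proof
              assume zx: "key z < key x"
              have "cum Y x + wage z \<le> cum Y x + wage d" using key_wage[OF zd] by simp
              also have "\<dots> \<le> cum Y d" by (rule cum_lt[OF Y dY 1])
              finally show "cum Y x + wage z < B" using dcB by simp
            qed
          next
            case 2
            have "cum Y d + wage x \<le> cum Y x" by (rule cum_lt[OF Y xY 2])
            moreover have "wage z \<le> wage x" using key_wage zd 2 by (meson less_trans)
            ultimately have False using dc xcB by simp
            then show ?thesis ..
          qed
          then show ?thesis using keep 3(1) by blast
        qed
      qed
      then have "card (insert z (chr Y - {d})) \<le> card (chr ?Y1)" by (rule card_mono[OF fin1])
      moreover have "z \<notin> chr Y - {d}" using zY chr_sub by blast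
      moreover have "d \<in> chr Y" unfolding cY using dP by simp
      moreover have "finite (chr Y)" using chr_fin[OF Y] .
      ultimately show ?thesis by (simp add: card_Suc_Diff1)
    qed
  qed
qed

lemma chr_LAD:
  assumes "Y'' \<subseteq> Y'" "Y' \<subseteq> X"
  shows "card (chr Y'') \<le> card (chr Y')"
proof -
  have gen: "finite D \<Longrightarrow> Y'' \<union> D \<subseteq> X \<longrightarrow> card (chr Y'') \<le> card (chr (Y'' \<union> D))" for D
  proof (induction D rule: finite_induct)
    case empty then show ?case by simp
  next
    case (insert z D)
    show ?case
    proof
      assume s: "Y'' \<union> insert z D \<subseteq> X"
      then have sD: "Y'' \<union> D \<subseteq> X" by blast
      then have IH: "card (chr Y'') \<le> card (chr (Y'' \<union> D))" using insert.IH by blast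
      show "card (chr Y'') \<le> card (chr (Y'' \<union> insert z D))"
      proof (cases "z \<in> Y'' \<union> D")
        case True
        then have e1: "Y'' \<union> insert z D = Y'' \<union> D" by blast
        show ?thesis unfolding e1 by (rule IH)
      next
        case False
        have "card (chr (Y'' \<union> D)) \<le> card (chr (insert z (Y'' \<union> D)))"
        proof (rule chr_ins[OF sD])
          show "z \<in> X" using s by blast
          show "z \<notin> Y'' \<union> D" using False .
        qed
        moreover have e2: "insert z (Y'' \<union> D) = Y'' \<union> insert z D" by blast
        ultimately show ?thesis using IH unfolding e2 by linarith
      qed
    qed
  qed
  have fD: "finite (Y' - Y'')" using finsub[OF assms(2)] by simp
  have e: "Y'' \<union> (Y' - Y'') = Y'" using assms(1) by blast
  have sx: "Y'' \<union> (Y' - Y'') \<subseteq> X" unfolding e by (rule assms(2))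
  have "card (chr Y'') \<le> card (chr (Y'' \<union> (Y' - Y'')))" using mp[OF gen[OF fD] sx] .
  then show ?thesis unfolding e .
qed

lemma chr_IRC:
  assumes "Y' \<subseteq> X" "Y'' \<subseteq> X - Y'" "chr (Y' \<union> Y'') \<subseteq> Y'"
  shows "chr Y' = chr (Y' \<union> Y'')"
proof -
  let ?U = "Y' \<union> Y''"
  have U: "?U \<subseteq> X" using assms by auto
  have s: "Y' - chr Y' \<subseteq> ?U - chr ?U" by (rule chr_SUB[OF _ U]) blast
  have sub: "chr ?U \<subseteq> chr Y'" using s assms(3) by blast
  have c: "card (chr Y') \<le> card (chr ?U)" by (rule chr_LAD[OF _ U]) blast
  have f: "finite (chr Y')" by (rule chr_fin[OF assms(1)])
  have "card (chr ?U) \<le> card (chr Y')" by (rule card_mono[OF f sub])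
  then have "card (chr ?U) = card (chr Y')" using c by linarith
  then have "chr ?U = chr Y'" by (rule card_subset_eq[OF f sub])
  then show ?thesis by (rule sym)
qed

end

theorem lemma5:
  fixes X :: "'a set" and wage :: "'a \<Rightarrow> real" and B :: real
    and r :: "'a \<Rightarrow> nat" and \<gamma> :: real and f :: "'a set \<Rightarrow> real"
  assumes "finite X"
    and "B > 0"
    and "\<forall>x\<in>X. 0 < wage x \<and> wage x \<le> B"
    and "inj_on r X"
    and "\<gamma> > 0"
    and "\<forall>Y. Y \<subseteq> X \<longrightarrow> f Y = \<gamma> * wsum wage Y"
  shows "SUB X (Ch wage B r) \<and> IRC X (Ch wage B r) \<and> LAD X (Ch wage B r)
         \<and> COM X B wage f (Ch wage B r)"
proof -
  interpret hosp X wage B r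
    by unfold_locales (use assms in auto)
  have SUB: "SUB X (Ch wage B r)" unfolding SUB_def
  proof (intro allI impI)
    fix Y' Y'' :: "'a set" assume a: "Y'' \<subseteq> Y' \<and> Y' \<subseteq> X"
    have C1: "Ch wage B r Y'' = chr Y''" by (rule Ch_chr) (use a in blast)
    have C2: "Ch wage B r Y' = chr Y'" by (rule Ch_chr) (use a in blast)
    show "Y'' - Ch wage B r Y'' \<subseteq> Y' - Ch wage B r Y'"
      unfolding C1 C2 by (rule chr_SUB) (use a in blast)+
  qed
  have LAD: "LAD X (Ch wage B r)" unfolding LAD_def
  proof (intro allI impI)
    fix Y' Y'' :: "'a set" assume a: "Y'' \<subseteq> Y' \<and> Y' \<subseteq> X"
    have C1: "Ch wage B r Y'' = chr Y''" by (rule Ch_chr) (use a in blast)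
    have C2: "Ch wage B r Y' = chr Y'" by (rule Ch_chr) (use a in blast)
    show "card (Ch wage B r Y'') \<le> card (Ch wage B r Y')"
      unfolding C1 C2 by (rule chr_LAD) (use a in blast)+
  qed
  have IRC: "IRC X (Ch wage B r)" unfolding IRC_def
  proof (intro allI impI)
    fix Y' Y'' :: "'a set" assume a: "Y' \<subseteq> X \<and> Y'' \<subseteq> X - Y'" and c: "Ch wage B r (Y' \<union> Y'') \<subseteq> Y'"
    have U: "Y' \<union> Y'' \<subseteq> X" using a by blast
    have C1: "Ch wage B r (Y' \<union> Y'') = chr (Y' \<union> Y'')" by (rule Ch_chr[OF U])
    have C2: "Ch wage B r Y' = chr Y'" by (rule Ch_chr) (use a in blast)
    show "Ch wage B r Y' = Ch wage B r (Y' \<union> Y'')"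
      unfolding C1 C2 by (rule chr_IRC) (use a c C1 in blast)+
  qed
  have COM: "COM X B wage f (Ch wage B r)" unfolding COM_def
  proof (intro allI impI)
    fix Y' Y'' :: "'a set" assume a: "Y'' \<subseteq> Y' \<and> Y' \<subseteq> X \<and> wsum wage Y'' \<le> max B (wsum wage (Ch wage B r Y'))"
    have C: "Ch wage B r Y' = chr Y'" by (rule Ch_chr) (use a in blast)
    have CX: "chr Y' \<subseteq> X" using chr_sub a by blast
    have "wsum wage Y'' \<le> wsum wage (chr Y')"
    proof (cases "chr Y' = Y'")
      case True
      have "wsum wage Y'' \<le> wsum wage Y'" by (rule wsum_mono) (use a in blast)+
      then show ?thesis using True by simp
    next
      case False
      then have "B \<le> wsum wage (chr Y')" using chr_COM a by blast
      then have "max B (wsum wage (chr Y')) = wsum wage (chr Y')" by simp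
      then show ?thesis using a unfolding C by linarith
    qed
    then have "\<gamma> * wsum wage Y'' \<le> \<gamma> * wsum wage (chr Y')" using assms(5) by (simp add: mult_left_mono)
    moreover have "f (chr Y') = \<gamma> * wsum wage (chr Y')" using assms(6) CX by blast
    moreover have "f Y'' = \<gamma> * wsum wage Y''" using assms(6) a by blast
    ultimately show "f (Ch wage B r Y') \<ge> f Y''" using C by simp
  qed
  show ?thesis using SUB IRC LAD COM by blast
qed

end
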